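(* Let $p_0$ be a probability density on $\mathbb{R}^d$ and let $\boldsymbol{\phi}^\theta_t:\mathbb{R}^d\to\mathbb{R}^d$, $t\in[0,1]$, be a vector field such that: (1) there is $K_1<\infty$ with $\|\boldsymbol{\phi}^\theta_t(\mathbf{x}_1)-\boldsymbol{\phi}^\theta_t(\mathbf{x}_2)\|\le K_1\|\mathbf{x}_1-\mathbf{x}_2\|$ for all $\mathbf{x}_1,\mathbf{x}_2\in\mathbb{R}^d$, $t\in[0,1]$; (2) there is $K_2<\infty$ with $\|\boldsymbol{\phi}^\theta_{t_1}(\mathbf{x})-\boldsymbol{\phi}^\theta_{t_2}(\mathbf{x})\|\le K_2|t_2-t_1|$ for all $\mathbf{x}$ and $t_1,t_2\in[0,1]$; (3) there is $K_3<\infty$ with $\|\boldsymbol{\phi}^\theta_t(\mathbf{x})\|\le K_3$ for all $\mathbf{x}$, $t$. Let $\mathbf{x}_t$ solve $\frac{\mathrm{d}\mathbf{x}_t}{\mathrm{d}t}=\boldsymbol{\phi}^\theta_t(\mathbf{x}_t)$ with $\mathbf{x}_0\sim p_0$, so $\mathbf{x}_1=\mathbf{x}_0+\int_0^1\boldsymbol{\phi}^\theta_t(\mathbf{x}_t)\,\mathrm{d}t$, with law $p_{\mathbf{x}_1}$. Let $h=1/n$ for some $n\in\mathbb{N}$ and define $\hat{\mathbf{x}}_0\sim p_0$, $\hat{\mathbf{x}}_{(k+1)h}=\hat{\mathbf{x}}_{kh}+h\,\boldsymbol{\phi}^\theta_{kh}(\hat{\mathbf{x}}_{kh})$ for $k=0,\dots,n-1$,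 with $p_{\hat{\mathbf{x}}_1}$ the law of $\hat{\mathbf{x}}_1$. Then $$W_2^2\big(p_{\mathbf{x}_1},p_{\hat{\mathbf{x}}_1}\big)\le h\,\frac{C\big(\exp(1+K_1^2)-1\big)}{1+K_1^2},$$ where $C=\frac12K_2^2+\frac{17}{2}K_1^2K_3^2+5K_1K_2K_3$.
   Context: $W_2(p,q)=\big(\inf_{\gamma\in\Gamma(p,q)}\mathbb{E}_{(\mathbf{x},\mathbf{y})\sim\gamma}\|\mathbf{x}-\mathbf{y}\|^2\big)^{1/2}$ is the 2-Wasserstein distance, where $\Gamma(p,q)$ is the set of couplings of $p$ and $q$; $\|\cdot\|$ is the Euclidean norm. *)

theory Defs
  imports "HOL-Probability.Probability"
begin

definition couplings :: "'a::euclidean_space measure \<Rightarrow> 'a measure \<Rightarrow> ('a \<times> 'a) measure set" where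
  "couplings p q = {\<gamma>. prob_space \<gamma> \<and> sets \<gamma> = sets borel \<and>
      distr \<gamma> borel fst = p \<and> distr \<gamma> borel snd = q}"

definition W2_sq :: "'a::euclidean_space measure \<Rightarrow> 'a measure \<Rightarrow> ennreal" where
  "W2_sq p q = (INF \<gamma> \<in> couplings p q. \<integral>\<^sup>+ z. ennreal ((norm (fst z - snd z))\<^sup>2) \<partial>\<gamma>)"

fun euler :: "(real \<Rightarrow> 'a::real_normed_vector \<Rightarrow> 'a) \<Rightarrow> real \<Rightarrow> nat \<Rightarrow> 'a \<Rightarrow> 'a" where
  "euler phi h 0 x = x"
| "euler phi h (Suc k) x = (let y = euler phi h k x in y + h *\<^sub>R phi (real k * h) y)"

end

theory Submission
  imports Defs
begin


lemma seg_bound: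
  fixes Y :: "real \<Rightarrow> 'a::real_normed_vector"
  assumes der: "\<And>t. t \<in> {0..1} \<Longrightarrow> (Y has_vector_derivative Y' t) (at t within {0..1})"
    and bnd: "\<And>t. t \<in> {a..b} \<Longrightarrow> norm (Y' t) \<le> g' t"
    and gder: "\<And>t. (g has_real_derivative g' t) (at t)"
    and ab: "0 \<le> a" "a \<le> b" "b \<le> 1"
  shows "norm (Y b - Y a) \<le> g b - g a"
proof (cases "a = b")
  case True then show ?thesis by simp
next
  case False
  then have lt: "a < b" using ab by simp
  have "continuous_on {0..1} Y"
    using der has_vector_derivative_continuous continuous_on_eq_continuous_within by blast
  then have c1: "continuous_on {a..b} Y"
    by (rule continuous_on_subset) (use ab in auto)
  have c2: "continuous_on {a..b} g"
    using gder by (meson DERIV_continuous continuous_at_imp_continuous_on)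
  show ?thesis
  proof (rule differentiable_bound_general[OF lt c1 c2])
    fix x assume x: "a < x" "x < b"
    then have "(Y has_vector_derivative Y' x) (at x within {0..1})" using der ab by auto
    moreover have "at x within {0..1} = at x" using x ab by (intro at_within_Icc_at) auto
    ultimately show "(Y has_vector_derivative Y' x) (at x)" by simp
    show "(g has_vector_derivative g' x) (at x)"
      using gder by (simp add: has_real_derivative_iff_has_vector_derivative)
    show "norm (Y' x) \<le> g' x" using bnd x by auto
  qed
qed

lemma local_err:
  fixes Y :: "real \<Rightarrow> 'a::real_normed_vector" and phi :: "real \<Rightarrow> 'a \<Rightarrow> 'a"
  assumes der: "\<And>t. t \<in> {0..1} \<Longrightarrow> (Y has_vector_derivative phi t (Y t)) (at t within {0..1})"
    and lip_x: "\<And>t x1 x2. t \<in> {0..1} \<Longrightarrow> norm (phi t x1 - phi t x2) \<le> K1 * norm (x1 - x2)"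
    and lip_t: "\<And>t1 t2 x. t1 \<in> {0..1} \<Longrightarrow> t2 \<in> {0..1} \<Longrightarrow> norm (phi t1 x - phi t2 x) \<le> K2 * \<bar>t2 - t1\<bar>"
    and bnd: "\<And>t x. t \<in> {0..1} \<Longrightarrow> norm (phi t x) \<le> K3"
    and K1: "K1 \<ge> 0"
    and ab: "0 \<le> a" "a \<le> b" "b \<le> 1"
  shows "norm (Y b - Y a - (b - a) *\<^sub>R phi a (Y a)) \<le> (K2 + K1 * K3) / 2 * (b - a)^2"
proof -
  have ylip: "norm (Y t - Y a) \<le> K3 * (t - a)" if "a \<le> t" "t \<le> b" for t
  proof -
    have "norm (Y t - Y a) \<le> K3 * t - K3 * a"
      by (rule seg_bound[where Y'="\<lambda>t. phi t (Y t)" and g'="\<lambda>_. K3"])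
         (use der bnd that ab in \<open>auto intro!: derivative_eq_intros\<close>)
    then show ?thesis by (simp add: algebra_simps)
  qed
  define Z where "Z t = Y t - (t - a) *\<^sub>R phi a (Y a)" for t
  have "norm (Z b - Z a) \<le> (K2 + K1 * K3) / 2 * (b - a)^2 - (K2 + K1 * K3) / 2 * (a - a)^2"
  proof (rule seg_bound[where Y'="\<lambda>t. phi t (Y t) - phi a (Y a)" and g'="\<lambda>t. (K2 + K1 * K3) * (t - a)"])
    fix t :: real assume t: "t \<in> {0..1}"
    show "(Z has_vector_derivative phi t (Y t) - phi a (Y a)) (at t within {0..1})"
      unfolding Z_def using der[OF t]
      by (auto intro!: derivative_eq_intros)
  next
    fix t assume t: "t \<in> {a..b}"
    have "norm (phi t (Y t) - phi a (Y a)) \<le> norm (phi t (Y t) - phi a (Y t)) + norm (phi a (Y t) - phi a (Y a))"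
      by (rule norm_diff_triangle_le[of _ "phi a (Y t)"]) simp_all
    also have "\<dots> \<le> K2 * \<bar>a - t\<bar> + K1 * norm (Y t - Y a)"
      using lip_t[of t a "Y t"] lip_x[of a "Y t" "Y a"] t ab by (intro add_mono) auto
    also have "\<dots> \<le> K2 * (t - a) + K1 * (K3 * (t - a))"
    proof -
      have "\<bar>a - t\<bar> = t - a" using t by auto
      moreover have "K1 * norm (Y t - Y a) \<le> K1 * (K3 * (t - a))"
        using ylip[of t] t K1 by (intro mult_left_mono) auto
      ultimately show ?thesis by simp
    qed
    finally show "norm (phi t (Y t) - phi a (Y a)) \<le> (K2 + K1 * K3) * (t - a)"
      by (simp add: algebra_simps)
  next
    fix t
    show "((\<lambda>t. (K2 + K1 * K3) / 2 * (t - a)^2) has_real_derivative (K2 + K1 * K3) * (t - a)) (at t)"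
      by (auto intro!: derivative_eq_intros)
  qed (use ab in auto)
  then show ?thesis unfolding Z_def by (simp add: algebra_simps)
qed



lemma disc_rec:
  fixes e :: "nat \<Rightarrow> real"
  assumes e0: "e 0 = 0"
    and step: "\<And>k. k < n \<Longrightarrow> e (Suc k) \<le> q * e k + D"
    and q: "q \<ge> 0"
  shows "k \<le> n \<Longrightarrow> e k \<le> D * (\<Sum>j<k. q ^ j)"
proof (induction k)
  case 0 then show ?case using e0 by simp
next
  case (Suc k)
  then have "e (Suc k) \<le> q * e k + D" using step by simp
  also have "\<dots> \<le> q * (D * (\<Sum>j<k. q ^ j)) + D"
    using Suc q by (intro add_right_mono mult_left_mono) auto
  also have "\<dots> = D * (\<Sum>j<Suc k. q ^ j)"
    by (simp add: sum_distrib_left lessThan_Suc_eq_insert_0 sum.reindex algebra_simps)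
  finally show ?case .
qed

lemma exp_riemann:
  fixes a h :: real
  assumes "a > 0" "h > 0"
  shows "(\<Sum>j<n. h * exp (real j * a * h)) \<le> (exp (real n * a * h) - 1) / a"
proof (induction n)
  case 0 then show ?case by simp
next
  case (Suc n)
  have "a * h \<le> exp (a * h) - 1" using exp_ge_add_one_self[of "a*h"] by linarith
  then have "exp (real n * a * h) * (a * h) \<le> exp (real n * a * h) * (exp (a * h) - 1)"
    by (intro mult_left_mono) auto
  then have "h * exp (real n * a * h) \<le> (exp (real (Suc n) * a * h) - exp (real n * a * h)) / a"
    using assms by (simp add: field_simps distrib_right exp_add)
  with Suc show ?case by (simp add: diff_divide_distrib)
qed

lemma final_num:
  fixes K M C E h :: real and n :: nat
  assumes n: "n \<ge> 1" and h: "h = 1 / real n" and K: "K \<ge> 0" and M: "M \<ge> 0"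
    and E: "0 \<le> E" "E \<le> h^2 * M * (\<Sum>j<n. (1 + h * K) ^ j)"
    and MC: "M^2 \<le> C"
  shows "E^2 \<le> h * (C * (exp (1 + K^2) - 1) / (1 + K^2))"
proof -
  define q where "q = 1 + h * K"
  define a where "a = 1 + K^2"
  have hpos: "h > 0" and hle: "h \<le> 1" and hn: "h * real n = 1" using n h by auto
  have apos: "a > 0" unfolding a_def by (simp add: add_pos_nonneg)
  have q0: "q \<ge> 0" unfolding q_def using hpos K by simp
  have qexp: "q^2 \<le> exp (a * h)"
  proof -
    have "q \<le> exp (h * K)" unfolding q_def using exp_ge_add_one_self[of "h*K"] by simp
    then have "q^2 \<le> (exp (h * K))^2" using q0 by (intro power_mono) auto
    also have "\<dots> = exp (2 * K * h)" by (simp add: power2_eq_square flip: exp_add)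
    also have "\<dots> \<le> exp (a * h)"
    proof -
      have "2 * K \<le> a" unfolding a_def using sum_squares_ge_zero[of "K - 1" 0]
        by (simp add: power2_eq_square algebra_simps)
      then show ?thesis using hpos by (simp add: mult_right_mono)
    qed
    finally show ?thesis .
  qed
  define S where "S = (\<Sum>j<n. q ^ j)"
  have "E^2 \<le> (h^2 * M * S)^2" using E unfolding S_def q_def by (intro power_mono) auto
  also have "\<dots> = h^4 * M^2 * S^2" by (simp add: power_mult_distrib)
  also have "h^4 * M^2 * S^2 \<le> h^4 * M^2 * ((\<Sum>j<n. exp (real j * a * h)) * real n)"
  proof (rule mult_left_mono)
    have "S^2 \<le> (\<Sum>j<n. (q ^ j)^2) * real n"
      unfolding S_def using sum_squared_le_sum_of_squares[of "\<lambda>j. q ^ j" "{..<n}"] by simp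
    also have "(\<Sum>j<n. (q ^ j)^2) \<le> (\<Sum>j<n. exp (real j * a * h))"
    proof (rule sum_mono)
      fix j
      have "(q ^ j)^2 = (q^2)^j" by (simp flip: power_mult mult.commute)
      also have "\<dots> \<le> (exp (a * h))^j" using qexp q0 by (intro power_mono) auto
      also have "\<dots> = exp (real j * a * h)" by (simp add: exp_of_nat_mult[symmetric] mult.assoc)
      finally show "(q ^ j)^2 \<le> exp (real j * a * h)" .
    qed
    then have "(\<Sum>j<n. (q ^ j)^2) * real n \<le> (\<Sum>j<n. exp (real j * a * h)) * real n"
      by (intro mult_right_mono) auto
    finally show "S^2 \<le> (\<Sum>j<n. exp (real j * a * h)) * real n" .
  qed simp
  also have "\<dots> = h^2 * M^2 * (\<Sum>j<n. h * exp (real j * a * h))"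
  proof -
    have "h^4 * M^2 * ((\<Sum>j<n. exp (real j * a * h)) * real n)
        = h^3 * M^2 * (\<Sum>j<n. exp (real j * a * h)) * (h * real n)"
      by (simp add: power_def numeral_eq_Suc algebra_simps)
    also have "\<dots> = h^2 * M^2 * (h * (\<Sum>j<n. exp (real j * a * h)))"
      using hn by (simp add: power_def numeral_eq_Suc algebra_simps)
    finally show ?thesis by (simp add: sum_distrib_left)
  qed
  also have "\<dots> \<le> h^2 * M^2 * ((exp (real n * a * h) - 1) / a)"
    using exp_riemann[OF apos hpos, of n] by (intro mult_left_mono) auto
  also have "real n * a * h = a" using hn by (simp add: algebra_simps)
  also have "h^2 * M^2 * ((exp a - 1) / a) \<le> h * (C * ((exp a - 1) / a))"
  proof -
    have g: "(exp a - 1) / a \<ge> 0" using apos by (simp add: divide_nonneg_pos)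
    have "h^2 \<le> h" using hpos hle by (simp add: power2_eq_square mult_left_le)
    then have "h^2 * M^2 \<le> h * C" using MC hpos by (intro mult_mono) auto
    then have "(h^2 * M^2) * ((exp a - 1) / a) \<le> (h * C) * ((exp a - 1) / a)"
      using g by (rule mult_right_mono)
    then show ?thesis by (simp add: mult.assoc)
  qed
  finally show ?thesis unfolding a_def by simp
qed

theorem lemmaD3:
  fixes f :: "'a::euclidean_space \<Rightarrow> real"
    and phi :: "real \<Rightarrow> 'a \<Rightarrow> 'a"
    and X :: "real \<Rightarrow> 'a \<Rightarrow> 'a"
    and K1 K2 K3 :: real
    and n :: nat
  assumes f_meas: "f \<in> borel_measurable borel"
    and f_nonneg: "\<And>x. f x \<ge> 0"
    and f_int: "(\<integral>\<^sup>+ x. ennreal (f x) \<partial>lborel) = 1"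
    and lip_x: "\<And>t x1 x2. t \<in> {0..1} \<Longrightarrow> norm (phi t x1 - phi t x2) \<le> K1 * norm (x1 - x2)"
    and lip_t: "\<And>t1 t2 x. t1 \<in> {0..1} \<Longrightarrow> t2 \<in> {0..1} \<Longrightarrow> norm (phi t1 x - phi t2 x) \<le> K2 * \<bar>t2 - t1\<bar>"
    and bnd: "\<And>t x. t \<in> {0..1} \<Longrightarrow> norm (phi t x) \<le> K3"
    and X0: "\<And>x0. X 0 x0 = x0"
    and X_ode: "\<And>x0 t. t \<in> {0..1} \<Longrightarrow>
        ((\<lambda>s. X s x0) has_vector_derivative phi t (X t x0)) (at t within {0..1})"
    and n_pos: "n \<ge> 1"
  shows "W2_sq (distr (density lborel f) borel (X 1))
               (distr (density lborel f) borel (euler phi (1 / real n) n))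
         \<le> ennreal ((1 / real n) *
              ((1/2 * K2\<^sup>2 + 17/2 * K1\<^sup>2 * K3\<^sup>2 + 5 * K1 * K2 * K3) * (exp (1 + K1\<^sup>2) - 1)
               / (1 + K1\<^sup>2)))"
  
proof -
  define C where "C = 1/2 * K2\<^sup>2 + 17/2 * K1\<^sup>2 * K3\<^sup>2 + 5 * K1 * K2 * K3"
  define G where "G = C * (exp (1 + K1\<^sup>2) - 1) / (1 + K1\<^sup>2)"
  define M where "M = (K2 + K1 * K3) / 2"
  have K3: "K3 \<ge> 0" using bnd[of 0 0] norm_ge_zero[of "phi 0 0"] by (simp del: norm_ge_zero)
  have K2: "K2 \<ge> 0" using lip_t[of 0 1 0] norm_ge_zero[of "phi 0 0 - phi 1 0"] by (simp del: norm_ge_zero)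
  have K1: "K1 \<ge> 0"
  proof -
    obtain b :: 'a where b: "b \<in> Basis" using nonempty_Basis by blast
    then have "norm b = 1" by simp
    then show ?thesis using lip_x[of 0 b 0] norm_ge_zero[of "phi 0 b - phi 0 0"] by (simp del: norm_ge_zero)
  qed
  have M0: "M \<ge> 0" unfolding M_def using K1 K2 K3 by simp
  have MC: "M^2 \<le> C"
  proof -
    have "C - M^2 = K2^2/4 + 33/4*(K1*K3)^2 + 9/2*(K1*K2*K3)"
      unfolding M_def C_def by (simp add: power2_eq_square field_simps)
    moreover have "0 \<le> K2^2/4 + 33/4*(K1*K3)^2 + 9/2*(K1*K2*K3)"
      using K1 K2 K3 by simp
    ultimately show ?thesis by linarith
  qed
  have pw: "norm (X 1 x - euler phi (1 / real m) m x)^2 \<le> (1 / real m) * G" if m: "m \<ge> 1" for m x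
  proof -
    define h where "h = 1 / real m"
    have hpos: "h > 0" and hn: "real m * h = 1" using m unfolding h_def by auto
    define e where "e k = norm (X (real k * h) x - euler phi h k x)" for k
    have step: "e (Suc k) \<le> (1 + h * K1) * e k + h^2 * M" if k: "k < m" for k
    proof -
      define a where "a = real k * h"
      have a0: "0 \<le> a" unfolding a_def using hpos by simp
      have "real (Suc k) * h \<le> real m * h" using k hpos by (intro mult_right_mono) auto
      then have a1: "a + h \<le> 1" unfolding a_def using hn by (simp add: algebra_simps)
      define y where "y = euler phi h k x"
      have eS: "e (Suc k) = norm ((X (a + h) x - X a x - h *\<^sub>R phi a (X a x)) + (X a x - y)
                 + h *\<^sub>R (phi a (X a x) - phi a y))"
        unfolding e_def a_def y_def by (simp add: Let_def algebra_simps)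
      have l1: "norm (X (a + h) x - X a x - h *\<^sub>R phi a (X a x)) \<le> M * h^2"
        using local_err[where Y="\<lambda>s. X s x" and phi=phi and a=a and b="a+h", OF X_ode lip_x lip_t bnd K1]
          a0 a1 hpos unfolding M_def by simp
      have l3: "norm (h *\<^sub>R (phi a (X a x) - phi a y)) \<le> h * (K1 * e k)"
        using lip_x[of a "X a x" y] a0 a1 hpos unfolding e_def a_def y_def
        by (simp add: mult_left_mono)
      have "e (Suc k) \<le> M * h^2 + e k + h * (K1 * e k)"
        unfolding eS using l1 l3 unfolding e_def a_def y_def
        by (smt (verit) norm_triangle_ineq)
      then show ?thesis by (simp add: algebra_simps)
    qed
    have "e m \<le> h^2 * M * (\<Sum>j<m. (1 + h * K1) ^ j)"
      using disc_rec[of e m "1 + h * K1" "h^2 * M", OF _ step] hpos K1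
      by (simp add: e_def X0)
    then have "(e m)^2 \<le> h * G"
      unfolding G_def using final_num[OF m h_def K1 M0 _ _ MC, of "e m"] e_def by simp
    then show ?thesis using hn unfolding e_def h_def by simp
  qed
  have cont: "continuous_on UNIV (phi t)" if t: "t \<in> {0..1}" for t
  proof -
    have "K1-lipschitz_on UNIV (phi t)"
      by (rule lipschitz_onI) (use lip_x[OF t] K1 in \<open>auto simp: dist_norm\<close>)
    then show ?thesis by (rule lipschitz_on_continuous_on)
  qed
  have emeas: "k \<le> m \<Longrightarrow> euler phi (1 / real m) k \<in> borel_measurable borel" if m: "m \<ge> 1" for m k
  proof (induction k)
    case 0 then show ?case by (simp add: id_def[symmetric])
  next
    case (Suc k)
    have t: "real k * (1 / real m) \<in> {0..1}" using Suc.prems m by (auto simp: field_simps)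
    have IH: "euler phi (1 / real m) k \<in> borel_measurable borel" using Suc by simp
    have pm: "(\<lambda>x. phi (real k * (1 / real m)) (euler phi (1 / real m) k x)) \<in> borel_measurable borel"
      using measurable_compose[OF IH borel_measurable_continuous_onI[OF cont[OF t]]] by (simp add: o_def)
    have "euler phi (1 / real m) (Suc k) = (\<lambda>x. euler phi (1 / real m) k x
            + (1 / real m) *\<^sub>R phi (real k * (1 / real m)) (euler phi (1 / real m) k x))"
      by (auto simp: Let_def)
    moreover have "\<dots> \<in> borel_measurable borel"
      using IH pm by (intro borel_measurable_add borel_measurable_scaleR) auto
    ultimately show ?case by simp
  qed
  have X1meas: "X 1 \<in> borel_measurable borel"
  proof (rule borel_measurable_LIMSEQ_metric[where f="\<lambda>i. euler phi (1 / real (Suc i)) (Suc i)"])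
    fix i show "euler phi (1 / real (Suc i)) (Suc i) \<in> borel_measurable borel"
      using emeas[of "Suc i" "Suc i"] by simp
  next
    fix x
    have G0: "G \<ge> 0"
      using pw[of 1 x] by (simp del: norm_ge_zero) (smt (verit) zero_le_power2)
    have lim0: "(\<lambda>i. sqrt (G * inverse (real (Suc i)))) \<longlonglongrightarrow> 0"
      using tendsto_real_sqrt[OF tendsto_mult_right_zero[OF LIMSEQ_inverse_real_of_nat, of G]] by simp
    have "(\<lambda>i. euler phi (1 / real (Suc i)) (Suc i) x - X 1 x) \<longlonglongrightarrow> 0"
    proof (rule Lim_null_comparison[OF _ lim0], rule always_eventually, rule allI)
      fix i
      have "(norm (X 1 x - euler phi (1 / real (Suc i)) (Suc i) x))^2 \<le> G * inverse (real (Suc i))"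
        using pw[of "Suc i" x] by (simp add: field_simps)
      then have "norm (X 1 x - euler phi (1 / real (Suc i)) (Suc i) x) \<le> sqrt (G * inverse (real (Suc i)))"
        using real_le_rsqrt by blast
      then show "norm (euler phi (1 / real (Suc i)) (Suc i) x - X 1 x) \<le> sqrt (G * inverse (real (Suc i)))"
        by (simp add: norm_minus_commute)
    qed
    then show "(\<lambda>i. euler phi (1 / real (Suc i)) (Suc i) x) \<longlonglongrightarrow> X 1 x"
      by (rule LIM_zero_cancel)
  qed
  define P where "P = density lborel f"
  define E where "E = euler phi (1 / real n) n"
  have Emeas: "E \<in> borel_measurable borel" unfolding E_def using emeas[OF n_pos] by simp
  have sP: "sets P = sets borel" unfolding P_def by simp
  have measP: "\<And>g. g \<in> borel_measurable borel \<Longrightarrow> g \<in> borel_measurable P"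
    using measurable_cong_sets[OF sP refl] by blast
  have spP: "space P = UNIV" unfolding P_def by simp
  have probP: "prob_space P"
  proof
    show "emeasure P (space P) = 1"
      unfolding P_def using f_meas f_int by (simp add: emeasure_density)
  qed
  define gam where "gam = distr P borel (\<lambda>x. (X 1 x, E x))"
  have gmeas: "(\<lambda>x. (X 1 x, E x)) \<in> borel_measurable P"
    by (rule measP, rule borel_measurable_Pair[OF X1meas Emeas])
  have fstm: "fst \<in> borel_measurable (borel :: ('a \<times> 'a) measure)"
    by (rule borel_measurable_continuous_onI) (intro continuous_intros)
  have sndm: "snd \<in> borel_measurable (borel :: ('a \<times> 'a) measure)"
    by (rule borel_measurable_continuous_onI) (intro continuous_intros)
  have coup: "gam \<in> couplings (distr P borel (X 1)) (distr P borel E)"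
    unfolding couplings_def gam_def
  proof (intro CollectI conjI)
    show "prob_space (distr P borel (\<lambda>x. (X 1 x, E x)))"
      by (rule prob_space.prob_space_distr[OF probP gmeas])
    show "sets (distr P borel (\<lambda>x. (X 1 x, E x))) = sets borel" by simp
    show "distr (distr P borel (\<lambda>x. (X 1 x, E x))) borel fst = distr P borel (X 1)"
      by (subst distr_distr[OF fstm gmeas]) (simp add: o_def)
    show "distr (distr P borel (\<lambda>x. (X 1 x, E x))) borel snd = distr P borel E"
      by (subst distr_distr[OF sndm gmeas]) (simp add: o_def)
  qed
  have nm0: "(\<lambda>z::'a \<times> 'a. (norm (fst z - snd z))\<^sup>2) \<in> borel_measurable borel"
    by (rule borel_measurable_continuous_onI) (intro continuous_intros)
  have nm: "(\<lambda>z::'a \<times> 'a. ennreal ((norm (fst z - snd z))\<^sup>2)) \<in> borel_measurable borel"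
    using nm0 by measurable
  have "W2_sq (distr P borel (X 1)) (distr P borel E)
        \<le> (\<integral>\<^sup>+ z. ennreal ((norm (fst z - snd z))\<^sup>2) \<partial>gam)"
    unfolding W2_sq_def by (rule INF_lower[OF coup])
  also have "\<dots> = (\<integral>\<^sup>+ x. ennreal ((norm (X 1 x - E x))\<^sup>2) \<partial>P)"
  proof -
    have nm': "(\<lambda>z::'a \<times> 'a. ennreal ((norm (fst z - snd z))\<^sup>2)) \<in> borel_measurable (distr P borel (\<lambda>x. (X 1 x, E x)))"
      using nm measurable_cong_sets[OF sets_distr refl] by blast
    show ?thesis unfolding gam_def using nn_integral_distr[OF gmeas nm'] by simp
  qed
  also have "\<dots> \<le> (\<integral>\<^sup>+ x. ennreal ((1 / real n) * G) \<partial>P)"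
    by (rule nn_integral_mono, rule ennreal_leI) (use pw[OF n_pos] in \<open>simp add: E_def\<close>)
  also have "\<dots> = ennreal ((1 / real n) * G)"
    using prob_space.emeasure_space_1[OF probP] by simp
  finally show ?thesis unfolding P_def E_def G_def C_def by simp
qed

end
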